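(* Consider a Markov decision process with finite state space $\mathcal{S}$, finite action set $\mathcal{A}$, transition probabilities $p(\cdot\mid s,a)$, rewards $r:\mathcal{S}\times\mathcal{A}\to[0,1]$ with $r_{\max}=\max_{s,a}r(s,a)$, and discount factor $\gamma\in(0,1)$. Let $Q^*$ be the unique fixed point of $\mathcal{T}Q(s,a)=\sum_{s'}p(s'\mid s,a)\bigl(r(s,a)+\gamma\max_{a'}Q(s',a')\bigr)$. Consider the algorithm: given $Q^0$ with $\|Q^0\|_\infty\le\frac{r_{\max}}{1-\gamma}$ and a number of iterations $N$, for $n=1,\dots,N$ set $k_n=\lceil n^2\gamma^{N-n}\rceil$, for every $(s,a)$ draw independent samples $s_1(s,a),\dots,s_{k_n}(s,a)\sim p(\cdot\mid s,a)$, compute $$\hat{\mathcal{T}}_nQ^{n-1}(s,a)=r(s,a)+\gamma\frac{1}{k_n}\sum_{i=1}^{k_n}\max_{a'\in\mathcal{A}}Q^{n-1}(s_i(s,a),a'),$$ and set $Q^n=(1-\beta_n)Q^0+\beta_n\hat{\mathcal{T}}_nQ^{n-1}$ with $\beta_n=\frac{n}{n+1}$. Then, given $\varepsilon>0$, the algorithm produces an iterate $Q^N$ with $\mathbb{E}(\|Q^N-Q^*\|_\infty)\le\varepsilon$ using at most $\tilde O\!\left(\frac{|\mathcal{S}\times\mathcal{A}|\,r_{\max}^2}{\varepsilon^2(1-\gamma)^5}\right)$ queries to the stochastic oracle.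
   Context: A query is one draw of a next state $s'\sim p(\cdot\mid s,a)$ for one pair $(s,a)$. $\tilde O$ denotes big-$O$ ignoring logarithmic factors. *)

theory Defs
  imports "HOL-Probability.Probability"
begin

(* States are {..<nS}, actions are {..<nA}; Q-functions are nat => nat => real,
   only their values on {..<nS} x {..<nA} matter. *)

definition maxA :: "nat \<Rightarrow> (nat \<Rightarrow> nat \<Rightarrow> real) \<Rightarrow> nat \<Rightarrow> real" where
  "maxA nA Q s = Max ((\<lambda>a. Q s a) ` {..<nA})"

definition supnorm :: "nat \<Rightarrow> nat \<Rightarrow> (nat \<Rightarrow> nat \<Rightarrow> real) \<Rightarrow> real" where
  "supnorm nS nA Q = Max ((\<lambda>(s,a). \<bar>Q s a\<bar>) ` ({..<nS} \<times> {..<nA}))"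

definition rmax :: "nat \<Rightarrow> nat \<Rightarrow> (nat \<Rightarrow> nat \<Rightarrow> real) \<Rightarrow> real" where
  "rmax nS nA r = Max ((\<lambda>(s,a). r s a) ` ({..<nS} \<times> {..<nA}))"

definition bellman :: "nat \<Rightarrow> nat \<Rightarrow> (nat \<Rightarrow> nat \<Rightarrow> nat pmf) \<Rightarrow> (nat \<Rightarrow> nat \<Rightarrow> real)
    \<Rightarrow> real \<Rightarrow> (nat \<Rightarrow> nat \<Rightarrow> real) \<Rightarrow> nat \<Rightarrow> nat \<Rightarrow> real" where
  "bellman nS nA p r \<gamma> Q s a = (\<Sum>s'<nS. pmf (p s a) s' * (r s a + \<gamma> * maxA nA Q s'))"

definition kn :: "real \<Rightarrow> nat \<Rightarrow> nat \<Rightarrow> nat" where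
  "kn \<gamma> N n = nat \<lceil>real n ^ 2 * \<gamma> ^ (N - n)\<rceil>"

definition beta :: "nat \<Rightarrow> real" where
  "beta n = real n / (real n + 1)"

definition samples :: "nat \<Rightarrow> nat \<Rightarrow> (nat \<Rightarrow> nat \<Rightarrow> nat pmf) \<Rightarrow> nat
    \<Rightarrow> (nat \<times> nat \<times> nat \<Rightarrow> nat) pmf" where
  "samples nS nA p k = Pi_pmf ({..<nS} \<times> {..<nA} \<times> {..<k}) 0 (\<lambda>(s,a,i). p s a)"

definition emp_bellman :: "nat \<Rightarrow> (nat \<Rightarrow> nat \<Rightarrow> real) \<Rightarrow> real \<Rightarrow> nat
    \<Rightarrow> (nat \<Rightarrow> nat \<Rightarrow> real) \<Rightarrow> (nat \<times> nat \<times> nat \<Rightarrow> nat) \<Rightarrow> nat \<Rightarrow> nat \<Rightarrow> real" where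
  "emp_bellman nA r \<gamma> k Q \<omega> s a =
     r s a + \<gamma> * (1 / real k) * (\<Sum>i<k. maxA nA Q (\<omega> (s, a, i)))"

definition alg_step :: "nat \<Rightarrow> nat \<Rightarrow> (nat \<Rightarrow> nat \<Rightarrow> nat pmf) \<Rightarrow> (nat \<Rightarrow> nat \<Rightarrow> real)
    \<Rightarrow> real \<Rightarrow> (nat \<Rightarrow> nat \<Rightarrow> real) \<Rightarrow> nat \<Rightarrow> nat
    \<Rightarrow> (nat \<Rightarrow> nat \<Rightarrow> real) \<Rightarrow> (nat \<Rightarrow> nat \<Rightarrow> real) pmf" where
  "alg_step nS nA p r \<gamma> Q0 N n Q =
     map_pmf (\<lambda>\<omega> s a. (1 - beta n) * Q0 s a + beta n * emp_bellman nA r \<gamma> (kn \<gamma> N n) Q \<omega> s a)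
       (samples nS nA p (kn \<gamma> N n))"

fun alg_iter :: "nat \<Rightarrow> nat \<Rightarrow> (nat \<Rightarrow> nat \<Rightarrow> nat pmf) \<Rightarrow> (nat \<Rightarrow> nat \<Rightarrow> real)
    \<Rightarrow> real \<Rightarrow> (nat \<Rightarrow> nat \<Rightarrow> real) \<Rightarrow> nat \<Rightarrow> nat \<Rightarrow> (nat \<Rightarrow> nat \<Rightarrow> real) pmf" where
  "alg_iter nS nA p r \<gamma> Q0 N 0 = return_pmf Q0"
| "alg_iter nS nA p r \<gamma> Q0 N (Suc n) =
     bind_pmf (alg_iter nS nA p r \<gamma> Q0 N n) (alg_step nS nA p r \<gamma> Q0 N (Suc n))"

definition queries :: "nat \<Rightarrow> nat \<Rightarrow> real \<Rightarrow> nat \<Rightarrow> nat" where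
  "queries nS nA \<gamma> N = (\<Sum>n=1..N. nS * nA * kn \<gamma> N n)"

end

theory Submission
  imports Defs
begin

lemma lessThan_ne: "1 \<le> n \<Longrightarrow> {..<n::nat} \<noteq> {}"
  by (metis lessThan_iff less_le_trans less_numeral_extra(1) empty_iff)

lemma maxA_ge: "nA \<ge> 1 \<Longrightarrow> a < nA \<Longrightarrow> Q s a \<le> maxA nA Q s"
  unfolding maxA_def by (rule Max_ge) auto

lemma maxA_in: "nA \<ge> 1 \<Longrightarrow> \<exists>a<nA. maxA nA Q s = Q s a"
proof -
  assume "nA \<ge> 1"
  then have "maxA nA Q s \<in> (\<lambda>a. Q s a) ` {..<nA}" unfolding maxA_def
    by (intro Max_in) (auto simp: lessThan_ne)
  then show ?thesis by auto
qed

lemma maxA_bound: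
  assumes "nA \<ge> 1" "\<And>a. a < nA \<Longrightarrow> \<bar>Q s a\<bar> \<le> B"
  shows "\<bar>maxA nA Q s\<bar> \<le> B"
proof -
  obtain a where a: "a < nA" "maxA nA Q s = Q s a" using maxA_in[OF assms(1)] by blast
  have "Q s 0 \<le> maxA nA Q s" using maxA_ge[OF assms(1)] assms(1) by simp
  then show ?thesis using a assms(2)[of a] assms(2)[of 0] assms(1) by (auto simp: abs_le_iff)
qed

lemma maxA_diff:
  assumes "nA \<ge> 1" "\<And>a. a < nA \<Longrightarrow> \<bar>Q s a - Q' s a\<bar> \<le> c"
  shows "\<bar>maxA nA Q s - maxA nA Q' s\<bar> \<le> c"
proof -
  obtain a where a: "a < nA" "maxA nA Q s = Q s a" using maxA_in[OF assms(1)] by blast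
  obtain a' where a': "a' < nA" "maxA nA Q' s = Q' s a'" using maxA_in[OF assms(1)] by blast
  have 1: "Q s a' \<le> maxA nA Q s" using maxA_ge[OF assms(1) a'(1)] .
  have 2: "Q' s a \<le> maxA nA Q' s" using maxA_ge[OF assms(1) a(1)] .
  show ?thesis using a a' 1 2 assms(2)[OF a(1)] assms(2)[OF a'(1)] by (auto simp: abs_le_iff)
qed

lemma supnorm_ge: "s < nS \<Longrightarrow> a < nA \<Longrightarrow> \<bar>Q s a\<bar> \<le> supnorm nS nA Q"
  unfolding supnorm_def by (rule Max_ge) auto

lemma supnorm_le:
  assumes "nS \<ge> 1" "nA \<ge> 1" "\<And>s a. s < nS \<Longrightarrow> a < nA \<Longrightarrow> \<bar>Q s a\<bar> \<le> c"
  shows "supnorm nS nA Q \<le> c"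
  unfolding supnorm_def using assms lessThan_ne[OF assms(1)] lessThan_ne[OF assms(2)] by (subst Max_le_iff) auto

lemma supnorm_nonneg: "nS \<ge> 1 \<Longrightarrow> nA \<ge> 1 \<Longrightarrow> 0 \<le> supnorm nS nA Q"
  using supnorm_ge[of 0 nS 0 nA Q] by simp

lemma rmax_ge: "s < nS \<Longrightarrow> a < nA \<Longrightarrow> r s a \<le> rmax nS nA r"
  unfolding rmax_def by (rule Max_ge) auto

lemma bellman_eq:
  assumes "set_pmf (p s a) \<subseteq> {..<nS}"
  shows "bellman nS nA p r \<gamma> Q s a = r s a + \<gamma> * (\<Sum>s'<nS. pmf (p s a) s' * maxA nA Q s')"
proof -
  have "bellman nS nA p r \<gamma> Q s a = (\<Sum>s'<nS. pmf (p s a) s') * r s a + \<gamma> * (\<Sum>s'<nS. pmf (p s a) s' * maxA nA Q s')"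
    unfolding bellman_def by (simp add: algebra_simps sum.distrib sum_distrib_left sum_distrib_right)
  also have "(\<Sum>s'<nS. pmf (p s a) s') = 1" using assms by (intro sum_pmf_eq_1) auto
  finally show ?thesis by simp
qed

lemma pmf_avg_bound:
  fixes P :: "nat pmf" and f :: "nat \<Rightarrow> real"
  assumes "set_pmf P \<subseteq> {..<nS}" "\<And>s'. s' < nS \<Longrightarrow> \<bar>f s'\<bar> \<le> c"
  shows "\<bar>\<Sum>s'<nS. pmf P s' * f s'\<bar> \<le> c"
proof -
  have "\<bar>\<Sum>s'<nS. pmf P s' * f s'\<bar> \<le> (\<Sum>s'<nS. \<bar>pmf P s' * f s'\<bar>)" by (rule sum_abs)
  also have "\<dots> \<le> (\<Sum>s'<nS. pmf P s' * c)"
    using assms(2) by (intro sum_mono) (auto simp: abs_mult intro: mult_left_mono)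
  also have "\<dots> = (\<Sum>s'<nS. pmf P s') * c" by (simp add: sum_distrib_right)
  also have "(\<Sum>s'<nS. pmf P s') = 1" by (rule sum_pmf_eq_1) (use assms in auto)
  finally show ?thesis by simp
qed

lemma Qs_bound:
  assumes nS: "nS \<ge> 1" and nA: "nA \<ge> 1" and g: "0 \<le> \<gamma>" "\<gamma> < 1"
    and r: "\<forall>s<nS. \<forall>a<nA. 0 \<le> r s a \<and> r s a \<le> 1"
    and p: "\<forall>s<nS. \<forall>a<nA. set_pmf (p s a) \<subseteq> {..<nS}"
    and fx: "\<forall>s<nS. \<forall>a<nA. Qs s a = bellman nS nA p r \<gamma> Qs s a"
  shows "supnorm nS nA Qs \<le> rmax nS nA r / (1 - \<gamma>)"
proof -
  define M where "M = supnorm nS nA Qs"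
  have "M \<le> rmax nS nA r + \<gamma> * M"
    unfolding M_def
  proof (rule supnorm_le[OF nS nA])
    fix s a assume sa: "s < nS" "a < nA"
    have "Qs s a = r s a + \<gamma> * (\<Sum>s'<nS. pmf (p s a) s' * maxA nA Qs s')"
      using fx sa bellman_eq[of p s a nS] p by auto
    moreover have "\<bar>\<Sum>s'<nS. pmf (p s a) s' * maxA nA Qs s'\<bar> \<le> supnorm nS nA Qs"
      using p sa by (intro pmf_avg_bound maxA_bound nA supnorm_ge) auto
    moreover have "0 \<le> r s a" "r s a \<le> rmax nS nA r" using r sa rmax_ge by auto
    ultimately have "\<bar>Qs s a\<bar> \<le> rmax nS nA r + \<gamma> * \<bar>\<Sum>s'<nS. pmf (p s a) s' * maxA nA Qs s'\<bar>"
      using g abs_triangle_ineq[of "r s a" "\<gamma> * (\<Sum>s'<nS. pmf (p s a) s' * maxA nA Qs s')"]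
      by (auto simp: abs_mult)
    also have "\<dots> \<le> rmax nS nA r + \<gamma> * supnorm nS nA Qs"
      using \<open>\<bar>\<Sum>s'<nS. _\<bar> \<le> _\<close> g by (intro add_left_mono mult_left_mono) auto
    finally show "\<bar>Qs s a\<bar> \<le> rmax nS nA r + \<gamma> * supnorm nS nA Qs" .
  qed
  then have "M * (1 - \<gamma>) \<le> rmax nS nA r" by (simp add: algebra_simps)
  then show ?thesis unfolding M_def using g by (simp add: field_simps)
qed

definition stepQ :: "nat \<Rightarrow> (nat \<Rightarrow> nat \<Rightarrow> real) \<Rightarrow> real \<Rightarrow> (nat \<Rightarrow> nat \<Rightarrow> real) \<Rightarrow> nat \<Rightarrow> nat
   \<Rightarrow> (nat \<Rightarrow> nat \<Rightarrow> real) \<Rightarrow> (nat \<times> nat \<times> nat \<Rightarrow> nat) \<Rightarrow> nat \<Rightarrow> nat \<Rightarrow> real" where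
  "stepQ nA r \<gamma> Q0 n k Q \<omega> = (\<lambda>s a. (1 - beta n) * Q0 s a + beta n * emp_bellman nA r \<gamma> k Q \<omega> s a)"

definition devf :: "nat \<Rightarrow> nat \<Rightarrow> (nat \<Rightarrow> nat \<Rightarrow> nat pmf) \<Rightarrow> nat \<Rightarrow> (nat \<Rightarrow> nat \<Rightarrow> real)
   \<Rightarrow> (nat \<times> nat \<times> nat \<Rightarrow> nat) \<Rightarrow> real" where
  "devf nS nA p k Q \<omega> = Max ((\<lambda>(s,a). \<bar>1 / real k * (\<Sum>i<k. maxA nA Q (\<omega> (s,a,i)))
       - (\<Sum>s'<nS. pmf (p s a) s' * maxA nA Q s')\<bar>) ` ({..<nS} \<times> {..<nA}))"

lemma alg_step_eq: "alg_step nS nA p r \<gamma> Q0 N n Q =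
   map_pmf (stepQ nA r \<gamma> Q0 n (kn \<gamma> N n) Q) (samples nS nA p (kn \<gamma> N n))"
  unfolding alg_step_def stepQ_def by simp

lemma devf_ge: "s < nS \<Longrightarrow> a < nA \<Longrightarrow> \<bar>1 / real k * (\<Sum>i<k. maxA nA Q (\<omega> (s,a,i)))
       - (\<Sum>s'<nS. pmf (p s a) s' * maxA nA Q s')\<bar> \<le> devf nS nA p k Q \<omega>"
  unfolding devf_def by (rule Max_ge) force+

lemma beta_facts: "0 \<le> beta n" "beta n \<le> 1" "(real n + 1) * (1 - beta n) = 1" "(real n + 1) * beta n = real n"
  unfolding beta_def by (auto simp: field_simps)

lemma comb:
  fixes x y z b n :: real
  assumes "(n+1)*(1-b) = 1" "(n+1)*b = n"
  shows "(n+1)*((1-b)*x + b*y - z) = (x - z) + n*(y - z)"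
proof -
  have "(n+1)*((1-b)*x + b*y - z) = ((n+1)*(1-b))*x + ((n+1)*b)*y - (n+1)*z" by (simp add: algebra_simps)
  also have "\<dots> = x + n*y - (n+1)*z" using assms by simp
  finally show ?thesis by (simp add: algebra_simps)
qed

lemma avg_bound:
  assumes "\<And>i. i < k \<Longrightarrow> \<bar>f i\<bar> \<le> B" "k \<ge> 1"
  shows "\<bar>1 / real k * (\<Sum>i<k. f i)\<bar> \<le> B"
proof -
  have "\<bar>\<Sum>i<k. f i\<bar> \<le> (\<Sum>i<k. \<bar>f i\<bar>)" by (rule sum_abs)
  also have "\<dots> \<le> (\<Sum>i<k. B)" using assms by (intro sum_mono) auto
  finally have "\<bar>\<Sum>i<k. f i\<bar> \<le> real k * B" by simp
  then show ?thesis using assms(2) by (simp add: abs_mult field_simps)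
qed

lemma step_bound:
  assumes nA: "nA \<ge> 1" and g: "0 \<le> \<gamma>" "\<gamma> < 1"
    and r: "\<forall>s<nS. \<forall>a<nA. 0 \<le> r s a \<and> r s a \<le> 1"
    and Q0: "supnorm nS nA Q0 \<le> rmax nS nA r / (1 - \<gamma>)"
    and Q: "\<forall>s<nS. \<forall>a<nA. \<bar>Q s a\<bar> \<le> rmax nS nA r / (1 - \<gamma>)"
    and \<omega>: "\<forall>s<nS. \<forall>a<nA. \<forall>i<k. \<omega> (s,a,i) < nS"
    and k: "k \<ge> 1" and sa: "s < nS" "a < nA"
  shows "\<bar>stepQ nA r \<gamma> Q0 n k Q \<omega> s a\<bar> \<le> rmax nS nA r / (1 - \<gamma>)"
proof -
  define R where "R = rmax nS nA r"
  define B where "B = R / (1 - \<gamma>)"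
  have RB: "R + \<gamma> * B = B" unfolding B_def using g by (simp add: field_simps)
  have avg: "\<bar>1 / real k * (\<Sum>i<k. maxA nA Q (\<omega> (s,a,i)))\<bar> \<le> B"
    using Q \<omega> sa k unfolding B_def R_def by (intro avg_bound maxA_bound nA) auto
  have r1: "0 \<le> r s a" "r s a \<le> R" using r sa rmax_ge unfolding R_def by auto
  have "\<bar>emp_bellman nA r \<gamma> k Q \<omega> s a\<bar> \<le> R + \<gamma> * B"
  proof -
    have "\<bar>emp_bellman nA r \<gamma> k Q \<omega> s a\<bar> \<le> \<bar>r s a\<bar> + \<gamma> * \<bar>1 / real k * (\<Sum>i<k. maxA nA Q (\<omega> (s,a,i)))\<bar>"
      unfolding emp_bellman_def using g abs_triangle_ineq[of "r s a" "\<gamma> * (1 / real k * (\<Sum>i<k. maxA nA Q (\<omega> (s,a,i))))"]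
      by (simp add: abs_mult mult.assoc)
    also have "\<dots> \<le> R + \<gamma> * B" using r1 avg g by (intro add_mono mult_left_mono) auto
    finally show ?thesis .
  qed
  then have e: "\<bar>emp_bellman nA r \<gamma> k Q \<omega> s a\<bar> \<le> B" using RB by simp
  have q0: "\<bar>Q0 s a\<bar> \<le> B" using supnorm_ge[OF sa, of Q0] Q0 unfolding B_def R_def by simp
  have "\<bar>stepQ nA r \<gamma> Q0 n k Q \<omega> s a\<bar> \<le> (1 - beta n) * \<bar>Q0 s a\<bar> + beta n * \<bar>emp_bellman nA r \<gamma> k Q \<omega> s a\<bar>"
    unfolding stepQ_def using beta_facts[of n] abs_triangle_ineq[of "(1 - beta n) * Q0 s a" "beta n * emp_bellman nA r \<gamma> k Q \<omega> s a"]
    by (simp add: abs_mult)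
  also have "\<dots> \<le> (1 - beta n) * B + beta n * B"
    using beta_facts[of n] q0 e by (intro add_mono mult_left_mono) auto
  also have "\<dots> = B" by (simp add: algebra_simps)
  finally show ?thesis unfolding B_def R_def .
qed

lemma step_err:
  assumes nS: "nS \<ge> 1" and nA: "nA \<ge> 1" and g: "0 \<le> \<gamma>" "\<gamma> < 1"
    and p: "\<forall>s<nS. \<forall>a<nA. set_pmf (p s a) \<subseteq> {..<nS}"
    and fx: "\<forall>s<nS. \<forall>a<nA. Qs s a = bellman nS nA p r \<gamma> Qs s a"
  shows "(real n + 1) * supnorm nS nA (\<lambda>s a. stepQ nA r \<gamma> Q0 n k Q \<omega> s a - Qs s a)
     \<le> supnorm nS nA (\<lambda>s a. Q0 s a - Qs s a) + \<gamma> * real n * (supnorm nS nA (\<lambda>s a. Q s a - Qs s a) + devf nS nA p k Q \<omega>)"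
proof -
  define c where "c = supnorm nS nA (\<lambda>s a. Q0 s a - Qs s a) + \<gamma> * real n * (supnorm nS nA (\<lambda>s a. Q s a - Qs s a) + devf nS nA p k Q \<omega>)"
  have "supnorm nS nA (\<lambda>s a. stepQ nA r \<gamma> Q0 n k Q \<omega> s a - Qs s a) \<le> c / (real n + 1)"
  proof (rule supnorm_le[OF nS nA])
    fix s a assume sa: "s < nS" "a < nA"
    define avg where "avg = 1 / real k * (\<Sum>i<k. maxA nA Q (\<omega> (s,a,i)))"
    define m where "m = (\<Sum>s'<nS. pmf (p s a) s' * maxA nA Q s')"
    define mQ where "mQ = (\<Sum>s'<nS. pmf (p s a) s' * maxA nA Qs s')"
    have Qs: "Qs s a = r s a + \<gamma> * mQ" using fx sa p bellman_eq[of p s a nS] unfolding mQ_def by auto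
    have eq: "(real n + 1) * (stepQ nA r \<gamma> Q0 n k Q \<omega> s a - Qs s a)
       = (Q0 s a - Qs s a) + real n * \<gamma> * ((avg - m) + (m - mQ))"
    proof -
      have "(real n + 1) * (stepQ nA r \<gamma> Q0 n k Q \<omega> s a - Qs s a)
         = (Q0 s a - Qs s a) + real n * (emp_bellman nA r \<gamma> k Q \<omega> s a - Qs s a)"
        unfolding stepQ_def by (rule comb) (use beta_facts[of n] in auto)
      also have "emp_bellman nA r \<gamma> k Q \<omega> s a - Qs s a = \<gamma> * ((avg - m) + (m - mQ))"
        unfolding emp_bellman_def Qs avg_def by (simp add: algebra_simps)
      finally show ?thesis by (simp add: algebra_simps)
    qed
    have d1: "\<bar>avg - m\<bar> \<le> devf nS nA p k Q \<omega>" unfolding avg_def m_def using devf_ge[OF sa] .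
    have d2: "\<bar>m - mQ\<bar> \<le> supnorm nS nA (\<lambda>s a. Q s a - Qs s a)"
    proof -
      have "m - mQ = (\<Sum>s'<nS. pmf (p s a) s' * (maxA nA Q s' - maxA nA Qs s'))"
        unfolding m_def mQ_def by (simp add: algebra_simps sum_subtractf)
      also have "\<bar>\<dots>\<bar> \<le> supnorm nS nA (\<lambda>s a. Q s a - Qs s a)"
        using p sa by (intro pmf_avg_bound maxA_diff nA) (auto intro: supnorm_ge[where Q="\<lambda>s a. Q s a - Qs s a", simplified])
      finally show ?thesis .
    qed
    have d0: "\<bar>Q0 s a - Qs s a\<bar> \<le> supnorm nS nA (\<lambda>s a. Q0 s a - Qs s a)"
      using supnorm_ge[OF sa, of "\<lambda>s a. Q0 s a - Qs s a"] by simp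
    have "(real n + 1) * \<bar>stepQ nA r \<gamma> Q0 n k Q \<omega> s a - Qs s a\<bar>
       = \<bar>(Q0 s a - Qs s a) + real n * \<gamma> * ((avg - m) + (m - mQ))\<bar>"
      using eq[symmetric] by (simp add: abs_mult)
    also have "\<dots> \<le> \<bar>Q0 s a - Qs s a\<bar> + real n * \<gamma> * (\<bar>avg - m\<bar> + \<bar>m - mQ\<bar>)"
    proof -
      have ng: "0 \<le> real n * \<gamma>" using g by simp
      have gg: "\<bar>\<gamma>\<bar> = \<gamma>" using g by simp
      have "\<bar>(Q0 s a - Qs s a) + real n * \<gamma> * ((avg - m) + (m - mQ))\<bar> \<le> \<bar>Q0 s a - Qs s a\<bar> + \<bar>real n * \<gamma> * ((avg - m) + (m - mQ))\<bar>"
        by (rule abs_triangle_ineq)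
      also have "\<bar>real n * \<gamma> * ((avg - m) + (m - mQ))\<bar> = real n * \<gamma> * \<bar>(avg - m) + (m - mQ)\<bar>"
        using ng gg by (simp add: abs_mult)
      also have "\<dots> \<le> real n * \<gamma> * (\<bar>avg - m\<bar> + \<bar>m - mQ\<bar>)"
        using ng by (intro mult_left_mono abs_triangle_ineq)
      finally show ?thesis by simp
    qed
    also have "\<dots> \<le> c"
    proof -
      have "real n * \<gamma> * (\<bar>avg - m\<bar> + \<bar>m - mQ\<bar>) \<le> real n * \<gamma> * (devf nS nA p k Q \<omega> + supnorm nS nA (\<lambda>s a. Q s a - Qs s a))"
        using d1 d2 g by (intro mult_left_mono) auto
      then show ?thesis unfolding c_def using d0 by (simp add: algebra_simps)
    qed
    finally show "\<bar>stepQ nA r \<gamma> Q0 n k Q \<omega> s a - Qs s a\<bar> \<le> c / (real n + 1)"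
      by (simp add: field_simps)
  qed
  then show ?thesis unfolding c_def by (simp add: field_simps)
qed

lemma expect_bind_bounded:
  fixes f :: "'b \<Rightarrow> real"
  assumes "\<And>x. \<bar>f x\<bar> \<le> c"
  shows "measure_pmf.expectation (bind_pmf M N) f = measure_pmf.expectation M (\<lambda>x. measure_pmf.expectation (N x) f)"
  unfolding measure_pmf_bind
  apply (rule integral_bind[where K="count_space UNIV" and B=c and B'=1])
  using assms by (auto simp: measure_pmf.finite_measure measure_pmf_in_subprob_algebra)

lemma hoeff_sa:
  fixes p :: "nat \<Rightarrow> nat \<Rightarrow> nat pmf" and V :: "nat \<Rightarrow> real"
  assumes k: "k \<ge> 1" and B: "B > 0" and V: "\<And>s'. s' < nS \<Longrightarrow> \<bar>V s'\<bar> \<le> B"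
    and sup: "set_pmf (p s a) \<subseteq> {..<nS}" and s: "s < nS" and a: "a < nA" and u: "u \<ge> 0"
  shows "measure_pmf.prob (samples nS nA p k)
     {\<omega>. u \<le> \<bar>(1 / real k) * (\<Sum>i<k. V (\<omega> (s,a,i))) - (\<Sum>s'<nS. pmf (p s a) s' * V s')\<bar>}
     \<le> 2 * exp (- (real k * u^2 / (2 * B^2)))"
proof -
  define M where "M = measure_pmf (samples nS nA p k)"
  define I where "I = (\<lambda>i. (s,a,i)) ` {..<k}"
  define m where "m = (\<Sum>s'<nS. pmf (p s a) s' * V s')"
  have finI: "finite I" unfolding I_def by simp
  have Isub: "I \<subseteq> {..<nS} \<times> {..<nA} \<times> {..<k}" using s a unfolding I_def by auto
  have supp: "\<omega> (s,a,i) \<in> set_pmf (p s a)" if "\<omega> \<in> set_pmf (samples nS nA p k)" "i < k" for \<omega> i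
    using set_Pi_pmf_subset'[of "{..<nS} \<times> {..<nA} \<times> {..<k}" 0 "\<lambda>(s,a,i). p s a"] that s a
    unfolding samples_def PiE_dflt_def by auto
  have EX: "measure_pmf.expectation (samples nS nA p k) (\<lambda>\<omega>. V (\<omega> j)) = m" if jI: "j \<in> I" for j
  proof -
    obtain i where i: "i < k" "j = (s,a,i)" using jI unfolding I_def by auto
    have "measure_pmf.expectation (samples nS nA p k) (\<lambda>\<omega>. V (\<omega> j)) =
          measure_pmf.expectation (map_pmf (\<lambda>f. f j) (samples nS nA p k)) V" by simp
    also have "map_pmf (\<lambda>f. f j) (samples nS nA p k) = p s a"
      unfolding samples_def using i s a by (subst Pi_pmf_component) auto
    also have "measure_pmf.expectation (p s a) V = m"
      unfolding m_def using sup by (subst integral_measure_pmf_real[of "{..<nS}"]) (auto simp: mult.commute)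
    finally show ?thesis .
  qed
  interpret P: prob_space M unfolding M_def by (rule measure_pmf.prob_space_axioms)
  interpret H: Hoeffding_ineq M I "\<lambda>j \<omega>. V (\<omega> j)" "\<lambda>_. -B" "\<lambda>_. B" "real k * m"
  proof unfold_locales
    show "finite I" by fact
    have "prob_space.indep_vars (measure_pmf (samples nS nA p k)) (\<lambda>_. count_space UNIV) (\<lambda>x f. f x) ({..<nS} \<times> {..<nA} \<times> {..<k})"
      unfolding samples_def by (rule indep_vars_Pi_pmf) simp
    then have "prob_space.indep_vars (measure_pmf (samples nS nA p k)) (\<lambda>_. count_space UNIV) (\<lambda>x f. f x) I"
      using Isub by (rule prob_space.indep_vars_subset[OF measure_pmf.prob_space_axioms])
    then show "prob_space.indep_vars M (\<lambda>_. borel) (\<lambda>j \<omega>. V (\<omega> j)) I"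
      unfolding M_def by (rule prob_space.indep_vars_compose2[OF measure_pmf.prob_space_axioms]) auto
    fix j assume "j \<in> I"
    then show "AE x in M. V (x j) \<in> {-B..B}"
      unfolding M_def I_def using supp sup V by (fastforce simp: AE_measure_pmf_iff abs_le_iff subset_eq)
  next
    show "real k * m \<equiv> (\<Sum>j\<in>I. prob_space.expectation M (\<lambda>\<omega>. V (\<omega> j)))"
      using EX unfolding M_def I_def by (simp add: sum.reindex inj_on_def card_image)
  qed
  have "P.prob {x\<in>space M. \<bar>(\<Sum>j\<in>I. V (x j)) - real k * m\<bar> \<ge> real k * u}
     \<le> 2 * exp (-2 * (real k * u)\<^sup>2 / (\<Sum>j\<in>I. (B - - B)\<^sup>2))"
    using B k u I_def by (intro H.Hoeffding_ineq_abs_ge) (auto simp: card_image inj_on_def)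
  also have "(\<Sum>j\<in>I. (B - - B)\<^sup>2) = real k * (4 * B^2)"
    unfolding I_def by (simp add: card_image inj_on_def power2_eq_square)
  also have "-2 * (real k * u)\<^sup>2 / (real k * (4 * B^2)) = - (real k * u^2 / (2 * B^2))"
    using k B by (simp add: field_simps power2_eq_square)
  also have "{x\<in>space M. \<bar>(\<Sum>j\<in>I. V (x j)) - real k * m\<bar> \<ge> real k * u} =
     {\<omega>. u \<le> \<bar>(1 / real k) * (\<Sum>i<k. V (\<omega> (s,a,i))) - m\<bar>}"
  proof -
    have "\<bar>(\<Sum>i<k. V (\<omega> (s,a,i))) - real k * m\<bar> = real k * \<bar>(1 / real k) * (\<Sum>i<k. V (\<omega> (s,a,i))) - m\<bar>" for \<omega>
    proof -
      have "(\<Sum>i<k. V (\<omega> (s,a,i))) - real k * m = real k * ((1 / real k) * (\<Sum>i<k. V (\<omega> (s,a,i))) - m)"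
        using k by (simp add: field_simps)
      then show ?thesis by (simp add: abs_mult)
    qed
    then show ?thesis unfolding M_def I_def using k
      by (auto simp: sum.reindex inj_on_def)
  qed
  finally show ?thesis unfolding M_def m_def .
qed

lemma samp_supp:
  assumes "\<omega> \<in> set_pmf (samples nS nA p k)" "s < nS" "a < nA" "i < k"
  shows "\<omega> (s,a,i) \<in> set_pmf (p s a)"
  using set_Pi_pmf_subset'[of "{..<nS} \<times> {..<nA} \<times> {..<k}" 0 "\<lambda>(s,a,i). p s a"] assms
  unfolding samples_def PiE_dflt_def by auto

lemma devf_bounds:
  assumes nS: "nS \<ge> 1" and nA: "nA \<ge> 1" and k: "k \<ge> 1"
    and V: "\<And>s'. s' < nS \<Longrightarrow> \<bar>maxA nA Q s'\<bar> \<le> B"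
    and p: "\<forall>s<nS. \<forall>a<nA. set_pmf (p s a) \<subseteq> {..<nS}"
    and \<omega>: "\<omega> \<in> set_pmf (samples nS nA p k)"
  shows "0 \<le> devf nS nA p k Q \<omega>" "devf nS nA p k Q \<omega> \<le> 2 * B"
proof -
  show "0 \<le> devf nS nA p k Q \<omega>"
    using devf_ge[of 0 nS 0 nA k Q \<omega> p] nS nA by simp
  show "devf nS nA p k Q \<omega> \<le> 2 * B"
    unfolding devf_def
  proof (subst Max_le_iff, goal_cases)
    case 3
    show ?case
    proof safe
      fix s a assume sa: "s < nS" "a < nA"
      have 1: "\<bar>1 / real k * (\<Sum>i<k. maxA nA Q (\<omega> (s, a, i)))\<bar> \<le> B"
        using samp_supp[OF \<omega> sa] p sa by (intro avg_bound V k) auto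
      have 2: "\<bar>\<Sum>s'<nS. pmf (p s a) s' * maxA nA Q s'\<bar> \<le> B"
        using p sa by (intro pmf_avg_bound V) auto
      show "\<bar>1 / real k * (\<Sum>i<k. maxA nA Q (\<omega> (s, a, i))) - (\<Sum>s'<nS. pmf (p s a) s' * maxA nA Q s')\<bar> \<le> 2 * B"
        using 1 2 by linarith
    qed
  qed (use nS nA lessThan_ne in auto)
qed

lemma integrable_pmf_bounded:
  fixes f :: "'a \<Rightarrow> real"
  assumes "\<And>x. x \<in> set_pmf M \<Longrightarrow> \<bar>f x\<bar> \<le> c"
  shows "integrable (measure_pmf M) f"
  by (rule measure_pmf.integrable_const_bound[where B=c]) (use assms in \<open>auto simp: AE_measure_pmf_iff\<close>)

lemma expectation_mono_pmf:
  fixes f g :: "'a \<Rightarrow> real"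
  assumes "integrable (measure_pmf M) f" "integrable (measure_pmf M) g" "\<And>x. x \<in> set_pmf M \<Longrightarrow> f x \<le> g x"
  shows "measure_pmf.expectation M f \<le> measure_pmf.expectation M g"
  by (rule integral_mono_AE) (use assms in \<open>auto simp: AE_measure_pmf_iff\<close>)

lemma devf_expect:
  assumes nS: "nS \<ge> 1" and nA: "nA \<ge> 1" and k: "k \<ge> 1" and B: "B > 0"
    and V: "\<And>s'. s' < nS \<Longrightarrow> \<bar>maxA nA Q s'\<bar> \<le> B"
    and p: "\<forall>s<nS. \<forall>a<nA. set_pmf (p s a) \<subseteq> {..<nS}"
  shows "measure_pmf.expectation (samples nS nA p k) (devf nS nA p k Q)
     \<le> B * (sqrt (2 * ln (2 * real (nS * nA) * real k)) + 2) / sqrt (real k)"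
proof -
  define M where "M = samples nS nA p k"
  define d where "d = real (nS * nA)"
  define L where "L = ln (2 * d * real k)"
  define u where "u = B * sqrt (2 * L / real k)"
  define S where "S = {\<omega>. u \<le> devf nS nA p k Q \<omega>}"
  define A where "A = (\<lambda>(s,a). {\<omega>. u \<le> \<bar>1 / real k * (\<Sum>i<k. maxA nA Q (\<omega> (s,a,i)))
       - (\<Sum>s'<nS. pmf (p s a) s' * maxA nA Q s')\<bar>})"
  have d1: "d \<ge> 1" unfolding d_def using nS nA by (metis One_nat_def mult_le_mono of_nat_1 of_nat_le_iff nat_1_eq_mult_iff)
  have k1: "real k \<ge> 1" using k by simp
  have dk: "1 \<le> d * real k" using mult_mono[of 1 d 1 "real k"] d1 k1 by simp
  have L0: "L \<ge> 0" unfolding L_def using dk by simp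
  have u0: "u \<ge> 0" unfolding u_def using B L0 by simp
  have u2: "real k * u^2 / (2 * B^2) = L"
    unfolding u_def using B k L0 by (simp add: power_mult_distrib)
  have SA: "S \<subseteq> (\<Union>x\<in>{..<nS} \<times> {..<nA}. A x)"
  proof
    fix \<omega> assume "\<omega> \<in> S"
    have "devf nS nA p k Q \<omega> \<in> (\<lambda>(s,a). \<bar>1 / real k * (\<Sum>i<k. maxA nA Q (\<omega> (s,a,i)))
       - (\<Sum>s'<nS. pmf (p s a) s' * maxA nA Q s')\<bar>) ` ({..<nS} \<times> {..<nA})"
      unfolding devf_def using nS nA lessThan_ne by (intro Max_in) auto
    then show "\<omega> \<in> (\<Union>x\<in>{..<nS} \<times> {..<nA}. A x)" using \<open>\<omega> \<in> S\<close> unfolding S_def A_def by (auto simp del: lessThan_iff) (use lessThan_iff in blast)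
  qed
  have "measure_pmf.prob M S \<le> measure_pmf.prob M (\<Union>x\<in>{..<nS} \<times> {..<nA}. A x)"
    using SA by (intro measure_pmf.finite_measure_mono) auto
  also have "\<dots> \<le> (\<Sum>x\<in>{..<nS} \<times> {..<nA}. measure_pmf.prob M (A x))"
    by (intro measure_pmf.finite_measure_subadditive_finite) auto
  also have "\<dots> \<le> (\<Sum>x\<in>{..<nS} \<times> {..<nA}. 2 * exp (- (real k * u^2 / (2 * B^2))))"
  proof (intro sum_mono)
    fix x assume "x \<in> {..<nS} \<times> {..<nA}"
    then obtain s a where x: "x = (s,a)" "s < nS" "a < nA" by auto
    show "measure_pmf.prob M (A x) \<le> 2 * exp (- (real k * u^2 / (2 * B^2)))"
      unfolding M_def A_def x(1) prod.case using p x by (intro hoeff_sa[where nA=nA] k B V u0) auto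
  qed
  also have "\<dots> = d * 2 * exp (- L)" unfolding d_def u2 by simp
  also have "exp (- L) = 1 / (2 * d * real k)"
  proof -
    have eL: "exp L = 2 * d * real k" unfolding L_def using dk by simp
    have "exp (- L) = 1 / exp L" by (simp add: exp_minus inverse_eq_divide)
    then show ?thesis using eL by simp
  qed
  finally have PS0: "measure_pmf.prob M S \<le> d * 2 * (1 / (2 * d * real k))" .
  have "d * 2 * (1 / (2 * d * real k)) = 1 / real k" using d1 by simp
  with PS0 have PS: "measure_pmf.prob M S \<le> 1 / real k" by simp
  have "measure_pmf.expectation M (devf nS nA p k Q) \<le> measure_pmf.expectation M (\<lambda>\<omega>. u + 2 * B * indicator S \<omega>)"
  proof (rule expectation_mono_pmf)
    show "integrable (measure_pmf M) (devf nS nA p k Q)"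
      unfolding M_def using devf_bounds[OF nS nA k V p] by (intro integrable_pmf_bounded[where c="2*B"]) auto
    show "integrable (measure_pmf M) (\<lambda>\<omega>. u + 2 * B * indicator S \<omega>)"
      by (intro integrable_pmf_bounded[where c="u + 2*B"]) (use u0 B in \<open>auto simp: indicator_def\<close>)
    fix \<omega> assume om: "\<omega> \<in> set_pmf M"
    have "devf nS nA p k Q \<omega> \<le> 2 * B" using devf_bounds(2)[OF nS nA k V p om[unfolded M_def]] .
    then show "devf nS nA p k Q \<omega> \<le> u + 2 * B * indicator S \<omega>"
      unfolding S_def using u0 by (auto simp: indicator_def)
  qed
  also have "measure_pmf.expectation M (\<lambda>\<omega>. u + 2 * B * indicator S \<omega>) = u + 2 * B * measure_pmf.prob M S"
  proof -
    have "measure_pmf.expectation M (\<lambda>\<omega>. u + 2 * B * indicator S \<omega>) =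
       measure_pmf.expectation M (\<lambda>_. u) + measure_pmf.expectation M (\<lambda>\<omega>. 2 * B * indicator S \<omega>)"
    proof (rule Bochner_Integration.integral_add)
      show "integrable (measure_pmf M) (\<lambda>_. u)" by simp
      show "integrable (measure_pmf M) (\<lambda>\<omega>. 2 * B * indicator S \<omega>)"
        by (intro integrable_pmf_bounded[where c="2*B"]) (use B in \<open>auto simp: indicator_def\<close>)
    qed
    also have "measure_pmf.expectation M (\<lambda>_. u) = u" by simp
    also have "measure_pmf.expectation M (\<lambda>\<omega>. 2 * B * indicator S \<omega>) = 2 * B * measure_pmf.prob M S"
      by simp
    finally show ?thesis .
  qed
  also have "\<dots> \<le> u + 2 * B * (1 / real k)" using PS B by (intro add_left_mono mult_left_mono) auto
  also have "\<dots> \<le> B * (sqrt (2 * ln (2 * real (nS * nA) * real k)) + 2) / sqrt (real k)"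
  proof -
    have "real k \<le> real k * real k" using k1 by (simp add: mult_le_cancel_left1)
    then have sk: "sqrt (real k) \<le> real k" using k1 by (simp add: real_sqrt_le_iff' power2_eq_square)
    have "u = B * sqrt (2 * L) / sqrt (real k)" unfolding u_def by (simp add: real_sqrt_divide)
    moreover have "2 * B * (1 / real k) \<le> 2 * B / sqrt (real k)"
    proof -
      have "2 * B / real k \<le> 2 * B / sqrt (real k)"
        using sk B k by (intro divide_left_mono) auto
      then show ?thesis by simp
    qed
    moreover have "B * sqrt (2 * L) / sqrt (real k) + 2 * B / sqrt (real k) = B * (sqrt (2 * L) + 2) / sqrt (real k)"
      by (simp add: add_divide_distrib distrib_left)
    ultimately show ?thesis unfolding L_def d_def by linarith
  qed
  finally show ?thesis unfolding M_def .
qed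

lemma expect_affine:
  fixes g :: "'a \<Rightarrow> real"
  assumes "integrable (measure_pmf M) g"
  shows "measure_pmf.expectation M (\<lambda>x. \<alpha> + \<beta> * g x) = \<alpha> + \<beta> * measure_pmf.expectation M g"
proof -
  have "measure_pmf.expectation M (\<lambda>x. \<alpha> + \<beta> * g x) = measure_pmf.expectation M (\<lambda>_. \<alpha>) + measure_pmf.expectation M (\<lambda>x. \<beta> * g x)"
    by (rule Bochner_Integration.integral_add) (use assms in auto)
  then show ?thesis by simp
qed

lemma expect_abs_le:
  fixes f :: "'a \<Rightarrow> real"
  assumes "\<And>x. x \<in> set_pmf M \<Longrightarrow> \<bar>f x\<bar> \<le> c"
  shows "\<bar>measure_pmf.expectation M f\<bar> \<le> c"
proof -
  have i: "integrable (measure_pmf M) f" by (rule integrable_pmf_bounded) (use assms in auto)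
  have "measure_pmf.expectation M f \<le> measure_pmf.expectation M (\<lambda>_. c)"
    by (rule expectation_mono_pmf[OF i]) (use assms in \<open>auto simp: abs_le_iff\<close>)
  moreover have "measure_pmf.expectation M (\<lambda>_. -c) \<le> measure_pmf.expectation M f"
    using assms by (intro expectation_mono_pmf[OF _ i]) (fastforce simp: abs_le_iff)+
  ultimately show ?thesis by (simp add: abs_le_iff)
qed

lemma kn_pos: "n \<ge> 1 \<Longrightarrow> 0 < \<gamma> \<Longrightarrow> kn \<gamma> N n \<ge> 1"
proof -
  assume n: "n \<ge> 1" and g: "0 < \<gamma>"
  have "0 < real n ^ 2 * \<gamma> ^ (N - n)" using n g by simp
  then have "0 < \<lceil>real n ^ 2 * \<gamma> ^ (N - n)\<rceil>" by simp
  then show ?thesis unfolding kn_def by linarith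
qed

locale mdp =
  fixes nS nA :: nat and p :: "nat \<Rightarrow> nat \<Rightarrow> nat pmf" and r :: "nat \<Rightarrow> nat \<Rightarrow> real"
    and \<gamma> :: real and Qs Q0 :: "nat \<Rightarrow> nat \<Rightarrow> real" and N :: nat
  assumes nS: "nS \<ge> 1" and nA: "nA \<ge> 1" and g0: "0 < \<gamma>" and g1: "\<gamma> < 1"
    and r: "\<forall>s<nS. \<forall>a<nA. 0 \<le> r s a \<and> r s a \<le> 1"
    and p: "\<forall>s<nS. \<forall>a<nA. set_pmf (p s a) \<subseteq> {..<nS}"
    and fx: "\<forall>s<nS. \<forall>a<nA. Qs s a = bellman nS nA p r \<gamma> Qs s a"
    and Q0: "supnorm nS nA Q0 \<le> rmax nS nA r / (1 - \<gamma>)"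
begin

definition "BB = rmax nS nA r / (1 - \<gamma>)"
definition "err Q = supnorm nS nA (\<lambda>s a. Q s a - Qs s a)"
definition "it n = alg_iter nS nA p r \<gamma> Q0 N n"
definition "Ee n = measure_pmf.expectation (it n) err"
definition "dl m = BB * (sqrt (2 * ln (2 * real (nS * nA) * real (kn \<gamma> N m))) + 2) / sqrt (real (kn \<gamma> N m))"

lemma B0: "BB \<ge> 0"
proof -
  have "0 \<le> r 0 0" using r nS nA by auto
  also have "\<dots> \<le> rmax nS nA r" using rmax_ge nS nA by auto
  finally show ?thesis unfolding BB_def using g1 by simp
qed

lemma Qs_b: "s < nS \<Longrightarrow> a < nA \<Longrightarrow> \<bar>Qs s a\<bar> \<le> BB"
  using supnorm_ge[of s nS a nA Qs] Qs_bound[OF nS nA _ g1 r p fx] g0 unfolding BB_def by force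

lemma Q0_b: "s < nS \<Longrightarrow> a < nA \<Longrightarrow> \<bar>Q0 s a\<bar> \<le> BB"
  using supnorm_ge[of s nS a nA Q0] Q0 unfolding BB_def by force

lemma it_bound: "Q \<in> set_pmf (it n) \<Longrightarrow> \<forall>s<nS. \<forall>a<nA. \<bar>Q s a\<bar> \<le> BB"
proof (induction n arbitrary: Q)
  case 0
  then show ?case using Q0_b by (simp add: it_def)
next
  case (Suc n)
  from Suc.prems obtain Q1 \<omega> where Q1: "Q1 \<in> set_pmf (it n)"
    and \<omega>: "\<omega> \<in> set_pmf (samples nS nA p (kn \<gamma> N (Suc n)))"
    and Q: "Q = stepQ nA r \<gamma> Q0 (Suc n) (kn \<gamma> N (Suc n)) Q1 \<omega>"
    by (auto simp: it_def alg_step_eq)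
  have IH: "\<forall>s<nS. \<forall>a<nA. \<bar>Q1 s a\<bar> \<le> BB" using Suc.IH[OF Q1] .
  have om: "\<forall>s<nS. \<forall>a<nA. \<forall>i<kn \<gamma> N (Suc n). \<omega> (s,a,i) < nS"
    using samp_supp[OF \<omega>] p by blast
  show ?case unfolding Q BB_def
    using step_bound[OF nA _ g1 r Q0 _ om kn_pos] IH g0 unfolding BB_def by auto
qed

lemma err_nonneg: "0 \<le> err Q"
  unfolding err_def by (rule supnorm_nonneg[OF nS nA])

lemma err_bound: "(\<forall>s<nS. \<forall>a<nA. \<bar>Q s a\<bar> \<le> BB) \<Longrightarrow> err Q \<le> 2 * BB"
  unfolding err_def
proof (rule supnorm_le[OF nS nA])
  fix s a assume "\<forall>s<nS. \<forall>a<nA. \<bar>Q s a\<bar> \<le> BB" "s < nS" "a < nA"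
  then have "\<bar>Q s a\<bar> \<le> BB" by blast
  then show "\<bar>Q s a - Qs s a\<bar> \<le> 2 * BB" using Qs_b[of s a] \<open>s < nS\<close> \<open>a < nA\<close> abs_triangle_ineq4[of "Q s a" "Qs s a"] by linarith
qed

lemma dl_nonneg: "m \<ge> 1 \<Longrightarrow> 0 \<le> dl m"
proof -
  assume m: "m \<ge> 1"
  have "1 \<le> nS * nA" using nS nA by (metis One_nat_def mult_le_mono nat_1_eq_mult_iff)
  moreover have "1 \<le> kn \<gamma> N m" using kn_pos[OF m g0] .
  ultimately have "1 \<le> nS * nA * kn \<gamma> N m" by (metis One_nat_def mult_le_mono nat_1_eq_mult_iff)
  then have "1 \<le> real (nS * nA) * real (kn \<gamma> N m)" by (metis of_nat_1 of_nat_le_iff of_nat_mult)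
  then have "0 \<le> ln (2 * real (nS * nA) * real (kn \<gamma> N m))" by simp
  then show ?thesis unfolding dl_def using B0 by simp
qed

lemma rec:
  assumes B: "BB > 0"
  shows "(real n + 2) * Ee (Suc n) \<le> err Q0 + \<gamma> * (real n + 1) * (Ee n + dl (Suc n))"
proof -
  define k where "k = kn \<gamma> N (Suc n)"
  have k: "k \<ge> 1" unfolding k_def using kn_pos g0 by simp
  define f where "f = (\<lambda>Q. min (err Q) (2 * BB))"
  define \<beta> where "\<beta> = \<gamma> * (real n + 1) / (real n + 2)"
  define \<alpha> where "\<alpha> = (err Q0 + \<gamma> * (real n + 1) * dl (Suc n)) / (real n + 2)"
  have bf: "\<bar>f Q\<bar> \<le> 2 * BB" for Q unfolding f_def using err_nonneg[of Q] B by auto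
  have "Ee (Suc n) = measure_pmf.expectation (it (Suc n)) f"
    unfolding Ee_def
    by (rule integral_cong_AE) (auto simp: AE_measure_pmf_iff f_def dest!: it_bound err_bound)
  also have "\<dots> = measure_pmf.expectation (it n) (\<lambda>Q. measure_pmf.expectation (alg_step nS nA p r \<gamma> Q0 N (Suc n) Q) f)"
    unfolding it_def by (simp only: alg_iter.simps) (rule expect_bind_bounded[OF bf])
  also have "\<dots> \<le> measure_pmf.expectation (it n) (\<lambda>Q. \<alpha> + \<beta> * err Q)"
  proof (rule expectation_mono_pmf)
    show "integrable (measure_pmf (it n)) (\<lambda>Q. measure_pmf.expectation (alg_step nS nA p r \<gamma> Q0 N (Suc n) Q) f)"
      by (rule integrable_pmf_bounded[where c="2*BB"]) (rule expect_abs_le, rule bf)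
    have a0: "0 \<le> \<alpha>" unfolding \<alpha>_def using err_nonneg[of Q0] dl_nonneg[of "Suc n"] g0 by simp
    have b0: "0 \<le> \<beta>" unfolding \<beta>_def using g0 by simp
    show "integrable (measure_pmf (it n)) (\<lambda>Q. \<alpha> + \<beta> * err Q)"
    proof (rule integrable_pmf_bounded[where c="\<alpha> + \<beta> * (2 * BB)"])
      fix Q assume "Q \<in> set_pmf (it n)"
      then have "err Q \<le> 2 * BB" by (intro err_bound it_bound)
      then show "\<bar>\<alpha> + \<beta> * err Q\<bar> \<le> \<alpha> + \<beta> * (2 * BB)"
        using a0 b0 err_nonneg[of Q] mult_left_mono[of "err Q" "2*BB" \<beta>] by auto
    qed
    fix Q assume Q: "Q \<in> set_pmf (it n)"
    have QB: "\<forall>s<nS. \<forall>a<nA. \<bar>Q s a\<bar> \<le> BB" using it_bound[OF Q] .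
    have V: "\<And>s'. s' < nS \<Longrightarrow> \<bar>maxA nA Q s'\<bar> \<le> BB" using QB by (intro maxA_bound nA) auto
    have "measure_pmf.expectation (alg_step nS nA p r \<gamma> Q0 N (Suc n) Q) f
       = measure_pmf.expectation (samples nS nA p k) (\<lambda>\<omega>. f (stepQ nA r \<gamma> Q0 (Suc n) k Q \<omega>))"
      unfolding alg_step_eq k_def by simp
    also have "\<dots> \<le> measure_pmf.expectation (samples nS nA p k)
         (\<lambda>\<omega>. (err Q0 + \<gamma> * (real n + 1) * err Q) / (real n + 2) + \<beta> * devf nS nA p k Q \<omega>)"
    proof (rule expectation_mono_pmf)
      show "integrable (measure_pmf (samples nS nA p k)) (\<lambda>\<omega>. f (stepQ nA r \<gamma> Q0 (Suc n) k Q \<omega>))"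
        by (rule integrable_pmf_bounded[where c="2*BB"]) (rule bf)
      show "integrable (measure_pmf (samples nS nA p k))
         (\<lambda>\<omega>. (err Q0 + \<gamma> * (real n + 1) * err Q) / (real n + 2) + \<beta> * devf nS nA p k Q \<omega>)"
      proof (rule integrable_pmf_bounded[where c="(err Q0 + \<gamma> * (real n + 1) * err Q) / (real n + 2) + \<beta> * (2 * BB)"])
        fix \<omega> assume om: "\<omega> \<in> set_pmf (samples nS nA p k)"
        have X0: "0 \<le> (err Q0 + \<gamma> * (real n + 1) * err Q) / (real n + 2)"
          using err_nonneg[of Q0] err_nonneg[of Q] g0 by simp
        have "0 \<le> devf nS nA p k Q \<omega>" "devf nS nA p k Q \<omega> \<le> 2 * BB"
          using devf_bounds[OF nS nA k V p om] by auto
        moreover have "0 \<le> \<beta> * devf nS nA p k Q \<omega>" using b0 calculation by simp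
        ultimately show "\<bar>(err Q0 + \<gamma> * (real n + 1) * err Q) / (real n + 2) + \<beta> * devf nS nA p k Q \<omega>\<bar>
           \<le> (err Q0 + \<gamma> * (real n + 1) * err Q) / (real n + 2) + \<beta> * (2 * BB)"
          using X0 b0 mult_left_mono[of "devf nS nA p k Q \<omega>" "2*BB" \<beta>] by simp
      qed
      fix \<omega> assume om: "\<omega> \<in> set_pmf (samples nS nA p k)"
      have "(real (Suc n) + 1) * err (stepQ nA r \<gamma> Q0 (Suc n) k Q \<omega>)
         \<le> err Q0 + \<gamma> * real (Suc n) * (err Q + devf nS nA p k Q \<omega>)"
        unfolding err_def by (rule step_err[OF nS nA _ g1 p fx]) (use g0 in auto)
      then have h: "(real n + 2) * err (stepQ nA r \<gamma> Q0 (Suc n) k Q \<omega>)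
         \<le> err Q0 + \<gamma> * (real n + 1) * (err Q + devf nS nA p k Q \<omega>)"
        by (simp add: add.commute add.left_commute)
      have "err (stepQ nA r \<gamma> Q0 (Suc n) k Q \<omega>)
         \<le> (err Q0 + \<gamma> * (real n + 1) * (err Q + devf nS nA p k Q \<omega>)) / (real n + 2)"
        using h by (simp add: le_divide_eq mult.commute)
      also have "\<dots> = (err Q0 + \<gamma> * (real n + 1) * err Q) / (real n + 2) + \<beta> * devf nS nA p k Q \<omega>"
        unfolding \<beta>_def by (simp add: add_divide_distrib distrib_left distrib_right)
      finally have "err (stepQ nA r \<gamma> Q0 (Suc n) k Q \<omega>)
         \<le> (err Q0 + \<gamma> * (real n + 1) * err Q) / (real n + 2) + \<beta> * devf nS nA p k Q \<omega>" .
      then show "f (stepQ nA r \<gamma> Q0 (Suc n) k Q \<omega>)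
         \<le> (err Q0 + \<gamma> * (real n + 1) * err Q) / (real n + 2) + \<beta> * devf nS nA p k Q \<omega>"
        unfolding f_def by linarith
    qed
    also have "\<dots> = (err Q0 + \<gamma> * (real n + 1) * err Q) / (real n + 2) + \<beta> * measure_pmf.expectation (samples nS nA p k) (devf nS nA p k Q)"
      by (rule expect_affine, rule integrable_pmf_bounded[where c="2*BB"])
         (use devf_bounds[OF nS nA k V p] in auto)
    also have "\<dots> \<le> (err Q0 + \<gamma> * (real n + 1) * err Q) / (real n + 2) + \<beta> * dl (Suc n)"
      using devf_expect[OF nS nA k B V p] b0 unfolding dl_def k_def[symmetric]
      by (intro add_left_mono mult_left_mono) auto
    also have "\<dots> = \<alpha> + \<beta> * err Q" unfolding \<alpha>_def \<beta>_def by (simp add: field_simps)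
    finally show "measure_pmf.expectation (alg_step nS nA p r \<gamma> Q0 N (Suc n) Q) f \<le> \<alpha> + \<beta> * err Q" .
  qed
  also have "\<dots> = \<alpha> + \<beta> * Ee n" unfolding Ee_def
    by (rule expect_affine, rule integrable_pmf_bounded[where c="2*BB"])
       (use err_nonneg in \<open>auto dest!: it_bound err_bound\<close>)
  finally have "Ee (Suc n) \<le> \<alpha> + \<beta> * Ee n" .
  then have "(real n + 2) * Ee (Suc n) \<le> (real n + 2) * (\<alpha> + \<beta> * Ee n)"
    by (intro mult_left_mono) auto
  also have "(real n + 2) * (\<alpha> + \<beta> * Ee n) = err Q0 + \<gamma> * (real n + 1) * (Ee n + dl (Suc n))"
  proof -
    have np: "real n + 2 \<noteq> 0" by linarith
    have "(real n + 2) * (\<alpha> + \<beta> * Ee n) = (real n + 2) * \<alpha> + ((real n + 2) * \<beta>) * Ee n"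
      by (simp add: algebra_simps)
    also have "(real n + 2) * \<alpha> = err Q0 + \<gamma> * (real n + 1) * dl (Suc n)" unfolding \<alpha>_def using np by simp
    also have "(real n + 2) * \<beta> = \<gamma> * (real n + 1)" unfolding \<beta>_def using np by simp
    finally show ?thesis by (simp add: algebra_simps)
  qed
  finally show ?thesis .
qed

end

lemma unroll:
  fixes a c :: "nat \<Rightarrow> real"
  assumes a0: "a 0 \<le> D" and D: "0 \<le> D" and g: "0 \<le> \<gamma>" "\<gamma> < 1"
    and rec: "\<And>n. a (Suc n) \<le> D + \<gamma> * a n + \<gamma> * c (Suc n)" and c: "\<And>m. m \<ge> 1 \<Longrightarrow> 0 \<le> c m"
  shows "a n \<le> D / (1 - \<gamma>) + (\<Sum>m=1..n. \<gamma> ^ (n - m) * c m)"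
proof (induction n)
  case 0
  have "D \<le> D / (1 - \<gamma>)" using D g by (simp add: le_divide_eq algebra_simps)
  then show ?case using a0 by simp
next
  case (Suc n)
  have S: "(\<Sum>m=1..Suc n. \<gamma> ^ (Suc n - m) * c m) = \<gamma> * (\<Sum>m=1..n. \<gamma> ^ (n - m) * c m) + c (Suc n)"
  proof -
    have "(\<Sum>m=1..Suc n. \<gamma> ^ (Suc n - m) * c m) = (\<Sum>m=1..n. \<gamma> ^ (Suc n - m) * c m) + c (Suc n)"
      by (simp add: sum.cl_ivl_Suc)
    also have "(\<Sum>m=1..n. \<gamma> ^ (Suc n - m) * c m) = (\<Sum>m=1..n. \<gamma> * (\<gamma> ^ (n - m) * c m))"
      by (intro sum.cong refl) (simp add: Suc_diff_le)
    finally show ?thesis by (simp add: sum_distrib_left)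
  qed
  have "a (Suc n) \<le> D + \<gamma> * a n + \<gamma> * c (Suc n)" by (rule rec)
  also have "\<dots> \<le> D + \<gamma> * (D / (1 - \<gamma>) + (\<Sum>m=1..n. \<gamma> ^ (n - m) * c m)) + c (Suc n)"
  proof -
    have "\<gamma> * a n \<le> \<gamma> * (D / (1 - \<gamma>) + (\<Sum>m=1..n. \<gamma> ^ (n - m) * c m))"
      using Suc.IH g by (intro mult_left_mono) auto
    moreover have "\<gamma> * c (Suc n) \<le> c (Suc n)" using c[of "Suc n"] g mult_right_mono[of \<gamma> 1 "c (Suc n)"] by simp
    ultimately show ?thesis by linarith
  qed
  also have "\<dots> = D / (1 - \<gamma>) + (\<Sum>m=1..Suc n. \<gamma> ^ (Suc n - m) * c m)"
    unfolding S using g by (simp add: field_simps)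
  finally show ?case .
qed

lemma geo:
  fixes x :: real
  assumes x: "0 \<le> x" "x < 1"
  shows "(\<Sum>m=1..N. x ^ (N - m)) \<le> 1 / (1 - x)"
proof (induction N)
  case 0
  then show ?case using x by simp
next
  case (Suc N)
  have "(\<Sum>m=1..Suc N. x ^ (Suc N - m)) = (\<Sum>m=1..N. x ^ (Suc N - m)) + 1"
    by (simp add: sum.cl_ivl_Suc)
  also have "(\<Sum>m=1..N. x ^ (Suc N - m)) = x * (\<Sum>m=1..N. x ^ (N - m))"
    by (simp add: sum_distrib_left Suc_diff_le)
  also have "x * (\<Sum>m=1..N. x ^ (N - m)) + 1 \<le> x * (1 / (1 - x)) + 1"
    using Suc.IH x by (intro add_right_mono mult_left_mono) auto
  also have "\<dots> = 1 / (1 - x)" using x by (simp add: field_simps)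
  finally show ?case .
qed

lemma kn_le: "0 < \<gamma> \<Longrightarrow> \<gamma> \<le> 1 \<Longrightarrow> real (kn \<gamma> N n) \<le> real n ^ 2 * \<gamma> ^ (N - n) + 1"
proof -
  assume g: "0 < \<gamma>" "\<gamma> \<le> 1"
  have x0: "0 \<le> real n ^ 2 * \<gamma> ^ (N - n)" using g by simp
  have "real (kn \<gamma> N n) = real_of_int \<lceil>real n ^ 2 * \<gamma> ^ (N - n)\<rceil>"
    unfolding kn_def using x0 by simp
  also have "\<dots> \<le> real n ^ 2 * \<gamma> ^ (N - n) + 1" by linarith
  finally show ?thesis .
qed

lemma kn_ge: "0 < \<gamma> \<Longrightarrow> real n ^ 2 * \<gamma> ^ (N - n) \<le> real (kn \<gamma> N n)"
proof -
  assume g: "0 < \<gamma>"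
  have x0: "0 \<le> real n ^ 2 * \<gamma> ^ (N - n)" using g by simp
  have "real (kn \<gamma> N n) = real_of_int \<lceil>real n ^ 2 * \<gamma> ^ (N - n)\<rceil>"
    unfolding kn_def using x0 by simp
  then show ?thesis by linarith
qed

lemma kn_le_sq: "0 < \<gamma> \<Longrightarrow> \<gamma> \<le> 1 \<Longrightarrow> kn \<gamma> N n \<le> n ^ 2"
proof -
  assume g: "0 < \<gamma>" "\<gamma> \<le> 1"
  have "real n ^ 2 * \<gamma> ^ (N - n) \<le> real n ^ 2 * 1"
    using g by (intro mult_left_mono power_le_one) auto
  then have "\<lceil>real n ^ 2 * \<gamma> ^ (N - n)\<rceil> \<le> int (n ^ 2)"
    by (simp add: ceiling_le_iff)
  then show ?thesis unfolding kn_def by linarith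
qed

lemma queries_bound:
  assumes g: "0 < \<gamma>" "\<gamma> < 1"
  shows "real (queries nS nA \<gamma> N) \<le> 2 * real (nS * nA) * real N ^ 2 / (1 - \<gamma>)"
proof -
  have "real (queries nS nA \<gamma> N) = real (nS * nA) * (\<Sum>n=1..N. real (kn \<gamma> N n))"
    unfolding queries_def by (simp add: sum_distrib_left)
  also have "(\<Sum>n=1..N. real (kn \<gamma> N n)) \<le> (\<Sum>n=1..N. real N ^ 2 * \<gamma> ^ (N - n) + 1)"
  proof (intro sum_mono)
    fix n assume n: "n \<in> {1..N}"
    have "real n ^ 2 * \<gamma> ^ (N - n) \<le> real N ^ 2 * \<gamma> ^ (N - n)"
      using n g by (intro mult_right_mono power_mono) auto
    then show "real (kn \<gamma> N n) \<le> real N ^ 2 * \<gamma> ^ (N - n) + 1"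
      using kn_le[of \<gamma> N n] g by linarith
  qed
  also have "\<dots> = real N ^ 2 * (\<Sum>n=1..N. \<gamma> ^ (N - n)) + real N"
    by (simp add: sum.distrib sum_distrib_left)
  also have "\<dots> \<le> real N ^ 2 * (1 / (1 - \<gamma>)) + real N ^ 2 * (1 / (1 - \<gamma>))"
  proof (intro add_mono mult_left_mono geo)
    have "real N \<le> real N ^ 2" by (cases N) (auto simp: power2_eq_square)
    also have "\<dots> \<le> real N ^ 2 * (1 / (1 - \<gamma>))"
    proof -
      have "1 \<le> 1 / (1 - \<gamma>)" using g by (simp add: le_divide_eq)
      then show ?thesis using mult_left_mono[of 1 "1 / (1 - \<gamma>)" "real N ^ 2"] by simp
    qed
    finally show "real N \<le> real N ^ 2 * (1 / (1 - \<gamma>))" .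
  qed (use g in auto)
  finally have "real (queries nS nA \<gamma> N) \<le> real (nS * nA) * (real N ^ 2 * (1 / (1 - \<gamma>)) + real N ^ 2 * (1 / (1 - \<gamma>)))"
    by (simp add: mult_left_mono)
  also have "real (nS * nA) * (real N ^ 2 * (1 / (1 - \<gamma>)) + real N ^ 2 * (1 / (1 - \<gamma>))) = 2 * real (nS * nA) * real N ^ 2 / (1 - \<gamma>)"
    by (simp add: divide_inverse algebra_simps)
  finally show ?thesis .
qed

lemma sqrt_geo:
  fixes \<gamma> :: real
  assumes g: "0 < \<gamma>" "\<gamma> < 1"
  shows "(\<Sum>m=1..N. sqrt \<gamma> ^ (N - m)) \<le> 2 / (1 - \<gamma>)"
proof -
  define s where "s = sqrt \<gamma>"
  have s0: "0 \<le> s" "s < 1" unfolding s_def using g by auto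
  have ss: "s * s = \<gamma>" unfolding s_def using g by simp
  have "(\<Sum>m=1..N. s ^ (N - m)) \<le> 1 / (1 - s)" by (rule geo) (use s0 in auto)
  also have "1 / (1 - s) \<le> 2 / (1 - \<gamma>)"
  proof -
    have "0 \<le> (s - 1) * (s - 1)" by simp
    then have "1 - \<gamma> \<le> 2 * (1 - s)" using ss by (simp add: algebra_simps)
    then show ?thesis using s0 g by (simp add: divide_simps)
  qed
  finally show ?thesis unfolding s_def .
qed

context mdp
begin

lemma Ee0: "Ee 0 = err Q0" by (simp add: Ee_def it_def)

lemma final_bound:
  assumes B: "BB > 0" and N: "N \<ge> 1"
  shows "(real N + 1) * Ee N \<le> 2 * BB * (1 + (sqrt (2 * ln (2 * real (nS*nA) * real N ^ 2)) + 2)) / (1 - \<gamma>)"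
proof -
  define G where "G = sqrt (2 * ln (2 * real (nS*nA) * real N ^ 2)) + 2"
  define D where "D = err Q0"
  have d1: "1 \<le> real (nS * nA)" using nS nA by (metis One_nat_def mult_le_mono nat_1_eq_mult_iff of_nat_1 of_nat_le_iff)
  have D0: "0 \<le> D" "D \<le> 2 * BB" unfolding D_def using err_nonneg err_bound Q0_b by auto
  have un: "(real N + 1) * Ee N \<le> D / (1 - \<gamma>) + (\<Sum>m=1..N. \<gamma> ^ (N - m) * (real m * dl m))"
  proof (rule unroll[where a="\<lambda>n. (real n + 1) * Ee n" and c="\<lambda>m. real m * dl m", OF _ D0(1) _ g1])
    show "(real 0 + 1) * Ee 0 \<le> D" using Ee0 D_def by simp
    show "0 \<le> \<gamma>" using g0 by simp
    fix n
    have "(real n + 2) * Ee (Suc n) \<le> err Q0 + \<gamma> * (real n + 1) * (Ee n + dl (Suc n))" by (rule rec[OF B])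
    then show "(real (Suc n) + 1) * Ee (Suc n) \<le> D + \<gamma> * ((real n + 1) * Ee n) + \<gamma> * (real (Suc n) * dl (Suc n))"
      unfolding D_def by (simp add: algebra_simps)
  next
    fix m :: nat assume "1 \<le> m" then show "0 \<le> real m * dl m" using dl_nonneg by simp
  qed
  have G0: "0 \<le> G"
  proof -
    have "1 \<le> real N ^ 2" using N by simp
    then have "1 \<le> real (nS * nA) * real N ^ 2" using mult_mono[of 1 "real (nS*nA)" 1 "real N ^ 2"] d1 by simp
    then have "0 \<le> ln (2 * real (nS * nA) * real N ^ 2)" by simp
    then show ?thesis unfolding G_def by simp
  qed
  have trm: "\<gamma> ^ (N - m) * (real m * dl m) \<le> BB * G * sqrt \<gamma> ^ (N - m)" if m: "m \<in> {1..N}" for m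
  proof -
    define k where "k = kn \<gamma> N m"
    define q where "q = sqrt \<gamma> ^ (N - m)"
    define gk where "gk = sqrt (2 * ln (2 * real (nS * nA) * real k)) + 2"
    define sk where "sk = sqrt (real k)"
    have k1: "k \<ge> 1" unfolding k_def using kn_pos g0 m by auto
    have sk0: "sk > 0" unfolding sk_def using k1 by simp
    have q0: "0 \<le> q" unfolding q_def using g0 by simp
    have kN: "real k \<le> real N ^ 2"
    proof -
      have "k \<le> m ^ 2" unfolding k_def using kn_le_sq g0 g1 by simp
      also have "m ^ 2 \<le> N ^ 2" using m by (simp add: power_mono)
      finally show ?thesis by (metis of_nat_le_iff of_nat_power)
    qed
    have gkG: "gk \<le> G"
    proof -
      have "2 * real (nS * nA) * real k \<le> 2 * real (nS * nA) * real N ^ 2"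
        using kN d1 by (intro mult_left_mono) auto
      moreover have "0 < 2 * real (nS * nA) * real k" using d1 k1 by simp
      ultimately have "ln (2 * real (nS * nA) * real k) \<le> ln (2 * real (nS * nA) * real N ^ 2)" by (rule ln_mono)
      then show ?thesis unfolding gk_def G_def by simp
    qed
    have gk0: "0 \<le> gk"
    proof -
      have "1 \<le> real (nS * nA) * real k" using mult_mono[of 1 "real (nS*nA)" 1 "real k"] d1 k1 by simp
      then have "0 \<le> ln (2 * real (nS * nA) * real k)" by simp
      then show ?thesis unfolding gk_def by simp
    qed
    have dl_eq: "dl m = BB * gk / sk" unfolding dl_def gk_def sk_def k_def by simp
    have mq: "real m * q \<le> sk"
    proof -
      have "sqrt (real m ^ 2 * \<gamma> ^ (N - m)) \<le> sk"
        unfolding sk_def k_def using kn_ge[OF g0] by (rule real_sqrt_le_mono)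
      moreover have "sqrt (real m ^ 2 * \<gamma> ^ (N - m)) = real m * q"
        unfolding q_def by (simp add: real_sqrt_mult real_sqrt_power)
      ultimately show ?thesis by simp
    qed
    have gq: "\<gamma> ^ (N - m) = q * q" unfolding q_def using g0
      by (simp add: power_mult_distrib[symmetric])
    have "\<gamma> ^ (N - m) * (real m * dl m) = (BB * gk * q) * (real m * q / sk)"
      unfolding gq dl_eq by (simp add: algebra_simps)
    also have "\<dots> \<le> (BB * gk * q) * 1"
    proof (rule mult_left_mono)
      show "real m * q / sk \<le> 1" using mq sk0 by simp
      show "0 \<le> BB * gk * q" using B gk0 q0 by simp
    qed
    also have "\<dots> \<le> BB * G * q" using gkG B q0 by (simp add: mult_left_mono mult_right_mono)
    finally show ?thesis unfolding q_def .
  qed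
  have "(\<Sum>m=1..N. \<gamma> ^ (N - m) * (real m * dl m)) \<le> (\<Sum>m=1..N. BB * G * sqrt \<gamma> ^ (N - m))"
    by (rule sum_mono) (rule trm)
  also have "\<dots> = BB * G * (\<Sum>m=1..N. sqrt \<gamma> ^ (N - m))" by (simp add: sum_distrib_left)
  also have "\<dots> \<le> BB * G * (2 / (1 - \<gamma>))"
    using sqrt_geo[OF g0 g1] B G0 by (intro mult_left_mono) auto
  finally have S: "(\<Sum>m=1..N. \<gamma> ^ (N - m) * (real m * dl m)) \<le> BB * G * (2 / (1 - \<gamma>))" .
  have "D / (1 - \<gamma>) \<le> 2 * BB / (1 - \<gamma>)" using D0 g1 by (simp add: divide_right_mono)
  with un S have "(real N + 1) * Ee N \<le> 2 * BB / (1 - \<gamma>) + BB * G * (2 / (1 - \<gamma>))" by linarith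
  also have "\<dots> = 2 * BB * (1 + G) / (1 - \<gamma>)" by (simp add: divide_inverse algebra_simps)
  finally show ?thesis unfolding G_def .
qed

end

lemma rmax_le1:
  assumes "nS \<ge> 1" "nA \<ge> 1" "\<forall>s<nS. \<forall>a<nA. 0 \<le> r s a \<and> r s a \<le> 1"
  shows "rmax nS nA r \<le> 1"
  unfolding rmax_def using assms lessThan_ne by (subst Max_le_iff) auto

lemma aux_eq:
  fixes w e d R L :: real
  assumes "0 < w" "0 < e"
  shows "2 * d * (2 * (30 * ((R / w) / (w * e)) * L)) ^ 2 / w = 7200 * d * R ^ 2 / (e ^ 2 * w ^ 5) * L ^ 2"
proof -
  have w5: "w ^ 5 = w * (w * (w * (w * w)))" by (simp add: numeral_eq_Suc)
  show ?thesis using assms unfolding w5 by (simp add: field_simps power2_eq_square)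
qed

lemma aux_eq2:
  fixes w e R G :: real
  assumes "0 < w" "0 < e"
  shows "2 * (R / w) * (1 + G) / w = e * (2 * ((R / w) / (w * e)) * (1 + G))"
  using assms by (simp add: field_simps)

lemma arith_part:
  fixes d R \<gamma> \<epsilon> :: real
  assumes d: "1 \<le> d" and g: "0 < \<gamma>" "\<gamma> < 1" and e: "0 < \<epsilon>" and R: "0 < R" "R \<le> 1"
    and small: "\<epsilon> < 2 * (R / (1 - \<gamma>))"
  defines "Z \<equiv> 2 + d + 1 / \<epsilon> + 1 / (1 - \<gamma>)"
  defines "L \<equiv> ln Z"
  defines "Y \<equiv> (R / (1 - \<gamma>)) / ((1 - \<gamma>) * \<epsilon>)"
  defines "N \<equiv> nat \<lceil>30 * Y * L\<rceil>"
  shows "N \<ge> 1"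
    and "2 * d * real N ^ 2 / (1 - \<gamma>) \<le> 7200 * d * R ^ 2 / (\<epsilon> ^ 2 * (1 - \<gamma>) ^ 5) * L ^ 2"
    and "2 * (R / (1 - \<gamma>)) * (1 + (sqrt (2 * ln (2 * d * real N ^ 2)) + 2)) / (1 - \<gamma>) \<le> \<epsilon> * (real N + 1)"
proof -
  have g1: "0 < 1 - \<gamma>" using g by simp
  have ig: "1 \<le> 1 / (1 - \<gamma>)" using g by (simp add: le_divide_eq)
  have ie: "0 < 1 / \<epsilon>" using e by simp
  have Z3: "3 \<le> Z" unfolding Z_def using d ig ie by linarith
  have Zig: "1 / (1 - \<gamma>) \<le> Z" unfolding Z_def using d ie by linarith
  have Zie: "1 / \<epsilon> \<le> Z" unfolding Z_def using d ig by linarith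
  have Zd: "d \<le> Z" unfolding Z_def using ig ie by linarith
  have L1: "1 \<le> L"
  proof -
    have "exp 1 \<le> Z" using exp_le Z3 by linarith
    then have "ln (exp 1) \<le> ln Z" by (intro ln_mono) auto
    then show ?thesis unfolding L_def by simp
  qed
  have LZ: "L \<le> Z" unfolding L_def using Z3 by (intro ln_bound) auto
  define Bv where "Bv = R / (1 - \<gamma>)"
  have Bv0: "0 < Bv" unfolding Bv_def using R g1 by simp
  have BvZ: "Bv \<le> Z" unfolding Bv_def using R g1 Zig by (meson divide_right_mono dual_order.trans less_imp_le)
  have Yeq: "Y = Bv * (1 / (1 - \<gamma>)) * (1 / \<epsilon>)" unfolding Y_def Bv_def by simp
  have Y0: "0 < Y" unfolding Yeq using Bv0 g1 e by simp
  have Yhalf: "1 / 2 < Y"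
  proof -
    have s2: "\<epsilon> < 2 * Bv" using small unfolding Bv_def .
    have "1 / 2 < Bv / \<epsilon>" using s2 e by (simp add: less_divide_eq)
    also have "Bv / \<epsilon> \<le> Bv / \<epsilon> * (1 / (1 - \<gamma>))" using ig Bv0 e mult_left_mono[of 1 "1 / (1 - \<gamma>)" "Bv / \<epsilon>"] by (simp only: mult_1_right) simp
    finally show ?thesis unfolding Yeq by (simp add: field_simps)
  qed
  have YZ: "Y \<le> Z ^ 3"
  proof -
    have "Y \<le> Z * Z * Z" unfolding Yeq
      using BvZ Zig Zie Bv0 g1 e by (intro mult_mono) auto
    then show ?thesis by (simp add: power3_eq_cube)
  qed
  define X where "X = 30 * Y * L"
  have X15: "15 \<le> X" proof -
    have "1/2 * 1 \<le> Y * L" using Yhalf L1 by (intro mult_mono) auto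
    then show ?thesis unfolding X_def by linarith
  qed
  have NX: "X \<le> real N" "real N \<le> X + 1" unfolding N_def X_def[symmetric] using X15 by linarith+
  have N2X: "real N \<le> 2 * X" using NX X15 by linarith
  show "N \<ge> 1" using NX X15 by linarith
  have N0: "0 \<le> real N" by simp
  have "2 * d * real N ^ 2 / (1 - \<gamma>) \<le> 2 * d * (2 * X) ^ 2 / (1 - \<gamma>)"
    using N2X N0 d g1 by (intro divide_right_mono mult_left_mono power_mono) auto
  also have "\<dots> = 7200 * d * R ^ 2 / (\<epsilon> ^ 2 * (1 - \<gamma>) ^ 5) * L ^ 2"
    unfolding X_def Y_def using g1 e by (rule aux_eq)
  finally show "2 * d * real N ^ 2 / (1 - \<gamma>) \<le> 7200 * d * R ^ 2 / (\<epsilon> ^ 2 * (1 - \<gamma>) ^ 5) * L ^ 2" .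
  define G where "G = sqrt (2 * ln (2 * d * real N ^ 2)) + 2"
  have NZ: "real N \<le> 60 * Z ^ 4"
  proof -
    have "real N \<le> 60 * (Y * L)" using N2X unfolding X_def by simp
    also have "Y * L \<le> Z ^ 3 * Z" using YZ LZ Y0 L1 by (intro mult_mono) auto
    also have "Z ^ 3 * Z = Z ^ 4" by (simp add: numeral_eq_Suc)
    finally show ?thesis by simp
  qed
  have N1: "1 \<le> real N" using NX X15 by linarith
  have big: "2 * d * real N ^ 2 \<le> Z ^ 18"
  proof -
    have "2 * d * real N ^ 2 \<le> 2 * Z * (60 * Z ^ 4) ^ 2"
      using Zd NZ d N0 by (intro mult_mono power_mono) auto
    also have "\<dots> = 7200 * Z ^ 9" by (simp add: power2_eq_square power_mult_distrib numeral_eq_Suc)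
    also have "\<dots> \<le> Z ^ 9 * Z ^ 9"
    proof (rule mult_right_mono)
      have "(3::real) ^ 9 \<le> Z ^ 9" using Z3 by (intro power_mono) auto
      then show "7200 \<le> Z ^ 9" by simp
    qed (use Z3 in simp)
    also have "\<dots> = Z ^ 18" by (simp flip: power_add)
    finally show ?thesis .
  qed
  have pos: "0 < 2 * d * real N ^ 2" using d N1 by simp
  have "ln (2 * d * real N ^ 2) \<le> ln (Z ^ 18)" using big pos by (rule ln_mono)
  also have "ln (Z ^ 18) = 18 * L" unfolding L_def using Z3 by (simp add: ln_realpow)
  finally have lnb: "ln (2 * d * real N ^ 2) \<le> 18 * L" .
  have "sqrt (2 * ln (2 * d * real N ^ 2)) \<le> sqrt (36 * L)" using lnb by simp
  also have "sqrt (36 * L) = 6 * sqrt L" by (simp add: real_sqrt_mult)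
  also have "sqrt L \<le> L"
  proof -
    have "L \<le> L * L" using L1 by (simp add: mult_le_cancel_left1)
    then show ?thesis using L1 by (simp add: real_sqrt_le_iff' power2_eq_square)
  qed
  finally have "sqrt (2 * ln (2 * d * real N ^ 2)) \<le> 6 * L" by simp
  then have G8: "G \<le> 8 * L" unfolding G_def using L1 by linarith
  have "2 * Y * (1 + G) \<le> 2 * Y * (9 * L)" using G8 L1 Y0 by (intro mult_left_mono) auto
  also have "\<dots> \<le> X" unfolding X_def using Y0 L1 by simp
  finally have key: "2 * Y * (1 + G) \<le> real N + 1" using NX by linarith
  have "2 * Bv * (1 + G) / (1 - \<gamma>) = \<epsilon> * (2 * Y * (1 + G))"
    unfolding Y_def Bv_def using g1 e by (rule aux_eq2)
  also have "\<dots> \<le> \<epsilon> * (real N + 1)" using key e by (intro mult_left_mono) auto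
  finally show "2 * (R / (1 - \<gamma>)) * (1 + (sqrt (2 * ln (2 * d * real N ^ 2)) + 2)) / (1 - \<gamma>) \<le> \<epsilon> * (real N + 1)"
    unfolding Bv_def G_def .
qed

lemma main_lemma:
  fixes nS nA :: nat and r :: "nat \<Rightarrow> nat \<Rightarrow> real" and \<gamma> \<epsilon> :: real
  assumes nS: "nS \<ge> 1" and nA: "nA \<ge> 1" and g0: "0 < \<gamma>" and g1: "\<gamma> < 1" and e: "\<epsilon> > 0"
    and r: "\<forall>s<nS. \<forall>a<nA. 0 \<le> r s a \<and> r s a \<le> 1"
  shows "\<exists>N::nat.
        real (queries nS nA \<gamma> N)
          \<le> 7200 * real (nS * nA) * rmax nS nA r ^ 2 / (\<epsilon> ^ 2 * (1 - \<gamma>) ^ 5)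
             * ln (2 + real (nS * nA) + 1 / \<epsilon> + 1 / (1 - \<gamma>)) ^ 2
      \<and> (\<forall>(p :: nat \<Rightarrow> nat \<Rightarrow> nat pmf) Qs Q0.
           (\<forall>s<nS. \<forall>a<nA. set_pmf (p s a) \<subseteq> {..<nS}) \<and>
           (\<forall>s<nS. \<forall>a<nA. Qs s a = bellman nS nA p r \<gamma> Qs s a) \<and>
           supnorm nS nA Q0 \<le> rmax nS nA r / (1 - \<gamma>) \<longrightarrow>
           measure_pmf.expectation (alg_iter nS nA p r \<gamma> Q0 N N)
              (\<lambda>Q. supnorm nS nA (\<lambda>s a. Q s a - Qs s a)) \<le> \<epsilon>)"
proof -
  define R where "R = rmax nS nA r"
  define d where "d = real (nS * nA)"
  define L where "L = ln (2 + d + 1 / \<epsilon> + 1 / (1 - \<gamma>))"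
  have R0: "0 \<le> R"
  proof -
    have "0 \<le> r 0 0" using r nS nA by auto
    also have "\<dots> \<le> R" unfolding R_def using rmax_ge nS nA by auto
    finally show ?thesis .
  qed
  have R1: "R \<le> 1" unfolding R_def by (rule rmax_le1[OF nS nA r])
  have d1: "1 \<le> d" unfolding d_def using nS nA by (metis One_nat_def mult_le_mono nat_1_eq_mult_iff of_nat_1 of_nat_le_iff)
  have gg: "0 < 1 - \<gamma>" using g1 by simp
  have RHS0: "0 \<le> 7200 * d * R ^ 2 / (\<epsilon> ^ 2 * (1 - \<gamma>) ^ 5) * L ^ 2"
    using d1 gg e by simp
  show ?thesis
  proof (cases "2 * (R / (1 - \<gamma>)) \<le> \<epsilon>")
    case True
    show ?thesis
    proof (intro exI[of _ 0] conjI allI impI)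
      show "real (queries nS nA \<gamma> 0) \<le> 7200 * real (nS * nA) * rmax nS nA r ^ 2 / (\<epsilon> ^ 2 * (1 - \<gamma>) ^ 5)
             * ln (2 + real (nS * nA) + 1 / \<epsilon> + 1 / (1 - \<gamma>)) ^ 2"
        using RHS0 unfolding queries_def R_def d_def L_def by simp
      fix p :: "nat \<Rightarrow> nat \<Rightarrow> nat pmf" and Qs Q0 :: "nat \<Rightarrow> nat \<Rightarrow> real"
      assume h: "(\<forall>s<nS. \<forall>a<nA. set_pmf (p s a) \<subseteq> {..<nS}) \<and>
           (\<forall>s<nS. \<forall>a<nA. Qs s a = bellman nS nA p r \<gamma> Qs s a) \<and>
           supnorm nS nA Q0 \<le> rmax nS nA r / (1 - \<gamma>)"
      interpret M: mdp nS nA p r \<gamma> Qs Q0 0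
        using h nS nA g0 g1 r by unfold_locales auto
      have "measure_pmf.expectation (alg_iter nS nA p r \<gamma> Q0 0 0)
              (\<lambda>Q. supnorm nS nA (\<lambda>s a. Q s a - Qs s a)) = M.err Q0"
        by (simp add: M.err_def)
      also have "\<dots> \<le> 2 * M.BB" using M.err_bound M.Q0_b by auto
      also have "\<dots> \<le> \<epsilon>" using True unfolding M.BB_def R_def by simp
      finally show "measure_pmf.expectation (alg_iter nS nA p r \<gamma> Q0 0 0)
              (\<lambda>Q. supnorm nS nA (\<lambda>s a. Q s a - Qs s a)) \<le> \<epsilon>" .
    qed
  next
    case False
    then have small: "\<epsilon> < 2 * (R / (1 - \<gamma>))" by simp
    have Rp: "0 < R"
    proof (rule ccontr)
      assume "\<not> 0 < R"
      then have "R = 0" using R0 by simp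
      then show False using small e by simp
    qed
    define N where "N = nat \<lceil>30 * ((R / (1 - \<gamma>)) / ((1 - \<gamma>) * \<epsilon>)) * L\<rceil>"
    note A = arith_part[OF d1 g0 g1 e Rp R1 small, folded L_def, folded N_def]
    show ?thesis
    proof (intro exI[of _ N] conjI allI impI)
      have "real (queries nS nA \<gamma> N) \<le> 2 * d * real N ^ 2 / (1 - \<gamma>)"
        unfolding d_def by (rule queries_bound[OF g0 g1])
      also have "\<dots> \<le> 7200 * d * R ^ 2 / (\<epsilon> ^ 2 * (1 - \<gamma>) ^ 5) * L ^ 2" by (rule A(2))
      finally show "real (queries nS nA \<gamma> N) \<le> 7200 * real (nS * nA) * rmax nS nA r ^ 2 / (\<epsilon> ^ 2 * (1 - \<gamma>) ^ 5)
             * ln (2 + real (nS * nA) + 1 / \<epsilon> + 1 / (1 - \<gamma>)) ^ 2"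
        unfolding R_def d_def L_def .
      fix p :: "nat \<Rightarrow> nat \<Rightarrow> nat pmf" and Qs Q0 :: "nat \<Rightarrow> nat \<Rightarrow> real"
      assume h: "(\<forall>s<nS. \<forall>a<nA. set_pmf (p s a) \<subseteq> {..<nS}) \<and>
           (\<forall>s<nS. \<forall>a<nA. Qs s a = bellman nS nA p r \<gamma> Qs s a) \<and>
           supnorm nS nA Q0 \<le> rmax nS nA r / (1 - \<gamma>)"
      interpret M: mdp nS nA p r \<gamma> Qs Q0 N
        using h nS nA g0 g1 r by unfold_locales auto
      have BB: "M.BB = R / (1 - \<gamma>)" unfolding M.BB_def R_def ..
      have Bp: "M.BB > 0" unfolding BB using Rp gg by simp
      have eq: "measure_pmf.expectation (alg_iter nS nA p r \<gamma> Q0 N N)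
              (\<lambda>Q. supnorm nS nA (\<lambda>s a. Q s a - Qs s a)) = M.Ee N"
        unfolding M.Ee_def M.it_def M.err_def ..
      have fb: "(real N + 1) * M.Ee N \<le> 2 * M.BB * (1 + (sqrt (2 * ln (2 * d * real N ^ 2)) + 2)) / (1 - \<gamma>)"
        using M.final_bound[OF Bp A(1)] unfolding d_def .
      also have "\<dots> \<le> \<epsilon> * (real N + 1)" unfolding BB by (rule A(3))
      finally have "(real N + 1) * M.Ee N \<le> (real N + 1) * \<epsilon>" by (simp add: mult.commute)
      then have "M.Ee N \<le> \<epsilon>" by (simp add: mult_le_cancel_left_pos)
      then show "measure_pmf.expectation (alg_iter nS nA p r \<gamma> Q0 N N)
              (\<lambda>Q. supnorm nS nA (\<lambda>s a. Q s a - Qs s a)) \<le> \<epsilon>" unfolding eq .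
    qed
  qed
qed

theorem theorem6:
  "\<exists>C::real. \<exists>m::nat. \<forall>nS nA (r :: nat \<Rightarrow> nat \<Rightarrow> real) (\<gamma>::real) (\<epsilon>::real).
     nS \<ge> 1 \<and> nA \<ge> 1 \<and> 0 < \<gamma> \<and> \<gamma> < 1 \<and> \<epsilon> > 0 \<and>
     (\<forall>s<nS. \<forall>a<nA. 0 \<le> r s a \<and> r s a \<le> 1) \<longrightarrow>
     (\<exists>N::nat.
        real (queries nS nA \<gamma> N)
          \<le> C * real (nS * nA) * rmax nS nA r ^ 2 / (\<epsilon> ^ 2 * (1 - \<gamma>) ^ 5)
             * ln (2 + real (nS * nA) + 1 / \<epsilon> + 1 / (1 - \<gamma>)) ^ m
      \<and> (\<forall>(p :: nat \<Rightarrow> nat \<Rightarrow> nat pmf) Qs Q0.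
           (\<forall>s<nS. \<forall>a<nA. set_pmf (p s a) \<subseteq> {..<nS}) \<and>
           (\<forall>s<nS. \<forall>a<nA. Qs s a = bellman nS nA p r \<gamma> Qs s a) \<and>
           supnorm nS nA Q0 \<le> rmax nS nA r / (1 - \<gamma>) \<longrightarrow>
           measure_pmf.expectation (alg_iter nS nA p r \<gamma> Q0 N N)
              (\<lambda>Q. supnorm nS nA (\<lambda>s a. Q s a - Qs s a)) \<le> \<epsilon>))"
proof (rule exI[of _ "7200::real"], rule exI[of _ "2::nat"], intro allI impI)
  fix nS nA :: nat and r :: "nat \<Rightarrow> nat \<Rightarrow> real" and \<gamma> \<epsilon> :: real
  assume "nS \<ge> 1 \<and> nA \<ge> 1 \<and> 0 < \<gamma> \<and> \<gamma> < 1 \<and> \<epsilon> > 0 \<and> (\<forall>s<nS. \<forall>a<nA. 0 \<le> r s a \<and> r s a \<le> 1)"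
  then show "\<exists>N::nat.
        real (queries nS nA \<gamma> N)
          \<le> 7200 * real (nS * nA) * rmax nS nA r ^ 2 / (\<epsilon> ^ 2 * (1 - \<gamma>) ^ 5)
             * ln (2 + real (nS * nA) + 1 / \<epsilon> + 1 / (1 - \<gamma>)) ^ 2
      \<and> (\<forall>(p :: nat \<Rightarrow> nat \<Rightarrow> nat pmf) Qs Q0.
           (\<forall>s<nS. \<forall>a<nA. set_pmf (p s a) \<subseteq> {..<nS}) \<and>
           (\<forall>s<nS. \<forall>a<nA. Qs s a = bellman nS nA p r \<gamma> Qs s a) \<and>
           supnorm nS nA Q0 \<le> rmax nS nA r / (1 - \<gamma>) \<longrightarrow>
           measure_pmf.expectation (alg_iter nS nA p r \<gamma> Q0 N N)
              (\<lambda>Q. supnorm nS nA (\<lambda>s a. Q s a - Qs s a)) \<le> \<epsilon>)"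
    by (intro main_lemma) auto
qed


end
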